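(* Let $M,N\ge 1$, $\gamma>0$, $\lambda_x,\lambda_v,\lambda_w>0$, and let $\{(\hat x_i,\hat v_i)\}_{i=1}^N$ solve the centralized herding system \[ \frac{d\hat x_i}{dt}=\hat v_i,\qquad \frac{d\hat v_i}{dt}=\frac{\lambda_x}{N}\sum_{j=1}^N\hat\phi_{ij}(\hat x_j-\hat x_i)+\frac{\lambda_v}{N}\sum_{j=1}^N\hat\phi_{ij}(\hat v_j-\hat v_i)-\lambda_w\hat x_i,\qquad \hat\phi_{ij}=(1+|\hat x_i-\hat x_j|^2)^{-\gamma/2}, \] with $\sum_i\hat x_i(0)=\sum_i\hat v_i(0)=0$. Assume $\frac12(\lambda_v/\lambda_x)^2\lambda_w>1$, \[ \max_{i,j}|\hat x_i(0)-\hat x_j(0)|<\frac12\sqrt{\Big(\frac12\Big(\frac{\lambda_v}{\lambda_x}\Big)^2\lambda_w\Big)^{2/\gamma}-1},\qquad \mathcal{E}_1(0)<\frac32\Big(1-\frac{M_0}{2}\Big)\lambda_w\max_{i,j}|\hat x_i(0)-\hat x_j(0)|^2, \] where $M_0=(1+4\max_{i,j}|\hat x_i(0)-\hat x_j(0)|^2)^{-\gamma/2}$. Let $\alpha=\frac{2\lambda_x^2}{(\lambda_x+\lambda_w)\lambda_v}$. Then there is $\delta\in(0,1)$ such that, with $\kappa=\delta\min\{\frac12,-1+\frac12(\lambda_v/\lambda_x)^2\lambda_wM_0\}\alpha$, for all $t\ge0$ and $1\le i,j\le N$, \[ |\hat x_i(t)-\hat x_j(t)|^2\le C_1e^{-\kappa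 t}\mathcal{E}_1(0),\qquad |\hat v_i(t)-\hat v_j(t)|^2\le C_2e^{-\kappa t}\mathcal{E}_1(0), \] where $C_1=\frac{4}{(2-M_0)\lambda_w}$ and $C_2=\frac{4M_0\lambda_w}{2M_0\lambda_w-\alpha^2}$.
   Context: $|\cdot|$ is the Euclidean norm on $\mathbb{R}^M$. The centralized variables are deviations $\hat x_i=x_i-x_c$, $\hat v_i=v_i-v_c$ from the averages for a solution of the original herding model, so their sums vanish for all time. $X(t)=\sum_i|\hat x_i|^2$, $V(t)=\sum_i|\hat v_i|^2$, $C(X,V)(t)=\sum_i\hat x_i\cdot\hat v_i$, and $\mathcal{E}_1=\lambda_wX+\alpha C(X,V)+V$ with $\alpha=\frac{2\lambda_x^2}{(\lambda_x+\lambda_w)\lambda_v}$. *)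

theory Defs
  imports "HOL-Analysis.Analysis"
begin

text \<open>Particles are indexed by i < N; positions/velocities live in real^'m (= R^M, M = CARD('m)).\<close>

definition herd_phi :: "real \<Rightarrow> real^'m \<Rightarrow> real^'m \<Rightarrow> real" where
  "herd_phi \<gamma> y z = (1 + (norm (y - z))\<^sup>2) powr (- \<gamma> / 2)"

definition herd_solution ::
  "nat \<Rightarrow> real \<Rightarrow> real \<Rightarrow> real \<Rightarrow> real \<Rightarrow>
   (nat \<Rightarrow> real \<Rightarrow> real^'m) \<Rightarrow> (nat \<Rightarrow> real \<Rightarrow> real^'m) \<Rightarrow> bool" where
  "herd_solution N \<gamma> lx lv lw x v \<longleftrightarrow>
     (\<forall>i<N. \<forall>t\<ge>0.
        (x i has_vector_derivative v i t) (at t within {0..}) \<and>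
        (v i has_vector_derivative
            ((lx / real N) *\<^sub>R (\<Sum>j<N. herd_phi \<gamma> (x i t) (x j t) *\<^sub>R (x j t - x i t))
           + (lv / real N) *\<^sub>R (\<Sum>j<N. herd_phi \<gamma> (x i t) (x j t) *\<^sub>R (v j t - v i t))
           - lw *\<^sub>R x i t)) (at t within {0..}))"

definition Xf :: "nat \<Rightarrow> (nat \<Rightarrow> real \<Rightarrow> real^'m) \<Rightarrow> real \<Rightarrow> real" where
  "Xf N x t = (\<Sum>i<N. (norm (x i t))\<^sup>2)"

definition Vf :: "nat \<Rightarrow> (nat \<Rightarrow> real \<Rightarrow> real^'m) \<Rightarrow> real \<Rightarrow> real" where
  "Vf N v t = (\<Sum>i<N. (norm (v i t))\<^sup>2)"

definition CXV :: "nat \<Rightarrow> (nat \<Rightarrow> real \<Rightarrow> real^'m) \<Rightarrow> (nat \<Rightarrow> real \<Rightarrow> real^'m) \<Rightarrow> real \<Rightarrow> real" where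
  "CXV N x v t = (\<Sum>i<N. x i t \<bullet> v i t)"

definition herd_alpha :: "real \<Rightarrow> real \<Rightarrow> real \<Rightarrow> real" where
  "herd_alpha lx lv lw = 2 * lx\<^sup>2 / ((lx + lw) * lv)"

definition energy1 :: "nat \<Rightarrow> real \<Rightarrow> real \<Rightarrow> real \<Rightarrow>
   (nat \<Rightarrow> real \<Rightarrow> real^'m) \<Rightarrow> (nat \<Rightarrow> real \<Rightarrow> real^'m) \<Rightarrow> real \<Rightarrow> real" where
  "energy1 N lx lv lw x v t =
     lw * Xf N x t + herd_alpha lx lv lw * CXV N x v t + Vf N v t"

definition diam0 :: "nat \<Rightarrow> (nat \<Rightarrow> real \<Rightarrow> real^'m) \<Rightarrow> real" where
  "diam0 N x = Max {norm (x i 0 - x j 0) | i j. i < N \<and> j < N}"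

end

theory Submission
  imports Defs
begin


lemma quad_nonneg:
  fixes u w k a b c :: real
  assumes "u \<ge> 0" "w \<ge> 0" "k \<ge> 0" "k^2 \<le> 4*u*w" "a \<ge> 0" "b \<ge> 0" "\<bar>c\<bar> \<le> a*b"
  shows "u*a^2 + w*b^2 + k*c \<ge> 0"
proof -
  have kc: "k*c \<ge> -(k*(a*b))"
    using assms(3,7) by (metis abs_le_iff minus_le_iff mult_left_mono mult_minus_right)
  have "u*a^2 + w*b^2 - k*(a*b) \<ge> 0"
  proof (cases "u = 0")
    case True
    then have "k^2 \<le> 0" using assms(4) by simp
    then have "k^2 = 0" using zero_le_power2[of k] by linarith
    then have "k = 0" by simp
    then show ?thesis using True assms by simp
  next
    case False
    then have up: "u > 0" using assms(1) by simp
    have "u*(u*a^2 + w*b^2 - k*(a*b)) = (u*a - k*b/2)^2 + (u*w - k^2/4)*b^2"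
      by (simp add: power2_eq_square algebra_simps)
    also have "\<dots> \<ge> 0" using assms(4) by (intro add_nonneg_nonneg) auto
    finally show ?thesis using up by (simp add: zero_le_mult_iff)
  qed
  then show ?thesis using kc by linarith
qed


lemma quad_vec:
  fixes x v :: "'a::real_inner" and u w k :: real
  assumes "u \<ge> 0" "w \<ge> 0" "k \<ge> 0" "k^2 \<le> 4*u*w"
  shows "u*(norm x)^2 + w*(norm v)^2 + k*(x \<bullet> v) \<ge> 0"
  using quad_nonneg[OF assms norm_ge_zero norm_ge_zero Cauchy_Schwarz_ineq2] .

lemma E_lower1:
  fixes xs vs :: "nat \<Rightarrow> 'a::real_inner" and lw M0 al :: real
  assumes "lw > 0" "M0 > 0" "al > 0" "al^2 \<le> 2*M0*lw"
  shows "lw*(\<Sum>i<N. (norm (xs i))^2) + al*(\<Sum>i<N. xs i \<bullet> vs i) + (\<Sum>i<N. (norm (vs i))^2)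
         \<ge> (1 - M0/2)*lw*(\<Sum>i<N. (norm (xs i))^2)"
proof -
  have "0 \<le> (\<Sum>i<N. (M0*lw/2)*(norm (xs i))^2 + 1*(norm (vs i))^2 + al*(xs i \<bullet> vs i))"
    using assms by (intro sum_nonneg quad_vec) auto
  also have "\<dots> = (M0*lw/2)*(\<Sum>i<N. (norm (xs i))^2) + (\<Sum>i<N. (norm (vs i))^2) + al*(\<Sum>i<N. xs i \<bullet> vs i)"
    by (simp add: sum.distrib sum_distrib_left)
  finally have a: "0 \<le> (M0*lw/2)*(\<Sum>i<N. (norm (xs i))^2) + (\<Sum>i<N. (norm (vs i))^2) + al*(\<Sum>i<N. xs i \<bullet> vs i)" .
  have b: "(1 - M0/2)*lw*(\<Sum>i<N. (norm (xs i))^2) = lw*(\<Sum>i<N. (norm (xs i))^2) - (M0*lw/2)*(\<Sum>i<N. (norm (xs i))^2)"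
    by (simp add: algebra_simps)
  show ?thesis unfolding b using a by linarith
qed

lemma E_lower2:
  fixes xs vs :: "nat \<Rightarrow> 'a::real_inner" and lw M0 al :: real
  assumes "lw > 0" "M0 > 0" "M0 \<le> 1" "al > 0"
  shows "lw*(\<Sum>i<N. (norm (xs i))^2) + al*(\<Sum>i<N. xs i \<bullet> vs i) + (\<Sum>i<N. (norm (vs i))^2)
         \<ge> (1 - al^2/(2*M0*lw))*(\<Sum>i<N. (norm (vs i))^2)"
proof -
  have k: "al^2 \<le> 4*lw*(al^2/(2*M0*lw))"
  proof -
    have "4*lw*(al^2/(2*M0*lw)) = 2*al^2/M0" using assms by (simp add: field_simps)
    moreover have "al^2 \<le> 2*al^2/M0" using assms by (simp add: field_simps)
    ultimately show ?thesis by simp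
  qed
  have "0 \<le> (\<Sum>i<N. lw*(norm (xs i))^2 + (al^2/(2*M0*lw))*(norm (vs i))^2 + al*(xs i \<bullet> vs i))"
    using assms k by (intro sum_nonneg quad_vec) auto
  also have "\<dots> = lw*(\<Sum>i<N. (norm (xs i))^2) + (al^2/(2*M0*lw))*(\<Sum>i<N. (norm (vs i))^2) + al*(\<Sum>i<N. xs i \<bullet> vs i)"
    by (simp add: sum.distrib sum_distrib_left)
  finally have a: "0 \<le> lw*(\<Sum>i<N. (norm (xs i))^2) + (al^2/(2*M0*lw))*(\<Sum>i<N. (norm (vs i))^2) + al*(\<Sum>i<N. xs i \<bullet> vs i)" .
  have b: "(1 - al^2/(2*M0*lw))*(\<Sum>i<N. (norm (vs i))^2) = (\<Sum>i<N. (norm (vs i))^2) - (al^2/(2*M0*lw))*(\<Sum>i<N. (norm (vs i))^2)"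
    by (simp add: algebra_simps)
  show ?thesis unfolding b using a by linarith
qed

lemma E_upper:
  fixes xs vs :: "nat \<Rightarrow> 'a::real_inner" and lw al :: real
  assumes "lw \<ge> 0" "al \<ge> 0"
  shows "lw*(\<Sum>i<N. (norm (xs i))^2) + al*(\<Sum>i<N. xs i \<bullet> vs i) + (\<Sum>i<N. (norm (vs i))^2)
         \<le> (lw + al/2 + 1)*((\<Sum>i<N. (norm (xs i))^2) + (\<Sum>i<N. (norm (vs i))^2))"
proof -
  have "0 \<le> (\<Sum>i<N. (al/2)*(norm (- xs i))^2 + (al/2)*(norm (vs i))^2 + al*((- xs i) \<bullet> vs i))"
    using assms by (intro sum_nonneg quad_vec) (auto simp: power2_eq_square)
  also have "\<dots> = (al/2)*(\<Sum>i<N. (norm (xs i))^2) + (al/2)*(\<Sum>i<N. (norm (vs i))^2) - al*(\<Sum>i<N. xs i \<bullet> vs i)"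
    by (simp add: sum.distrib sum_distrib_left sum_subtractf sum_negf)
  finally have a: "0 \<le> (al/2)*(\<Sum>i<N. (norm (xs i))^2) + (al/2)*(\<Sum>i<N. (norm (vs i))^2) - al*(\<Sum>i<N. xs i \<bullet> vs i)" .
  have b: "(lw + al/2 + 1)*((\<Sum>i<N. (norm (xs i))^2) + (\<Sum>i<N. (norm (vs i))^2)) =
     lw*(\<Sum>i<N. (norm (xs i))^2) + (al/2)*(\<Sum>i<N. (norm (xs i))^2) + (al/2)*(\<Sum>i<N. (norm (vs i))^2)
     + (\<Sum>i<N. (norm (vs i))^2) + lw * (\<Sum>i<N. (norm (vs i))^2) + (\<Sum>i<N. (norm (xs i))^2)" by (simp add: algebra_simps)
  have c: "0 \<le> lw * (\<Sum>i<N. (norm (vs i))^2)" using assms by (intro mult_nonneg_nonneg sum_nonneg) auto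
  have d: "0 \<le> (\<Sum>i<N. (norm (xs i))^2)" by (auto intro: sum_nonneg)
  show ?thesis unfolding b using a c d by linarith
qed

lemma pair_le:
  fixes f :: "nat \<Rightarrow> 'a::real_normed_vector"
  assumes "i < N" "j < N"
  shows "(norm (f i - f j))^2 \<le> 2*(\<Sum>k<N. (norm (f k))^2)"
proof (cases "i = j")
  case True then show ?thesis by (auto intro: sum_nonneg)
next
  case False
  have "(norm (f i - f j))^2 \<le> (norm (f i) + norm (f j))^2"
    by (intro power_mono norm_triangle_ineq4) auto
  also have "\<dots> \<le> 2*((norm (f i))^2 + (norm (f j))^2)"
    by (smt (verit) power2_sum sum_squares_bound)
  also have "(norm (f i))^2 + (norm (f j))^2 = (\<Sum>k\<in>{i,j}. (norm (f k))^2)" using False by simp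
  also have "\<dots> \<le> (\<Sum>k<N. (norm (f k))^2)" using assms by (intro sum_mono2) auto
  finally show ?thesis by simp
qed



definition lamc :: "real \<Rightarrow> real \<Rightarrow> real \<Rightarrow> real \<Rightarrow> real" where
  "lamc lx lv lw M0 =
    (lx^2 * (lv^2*M0*(4*lw*(lx+lw) - lw^2) - 4*lx^3 - 4*lx^2*lw) / (4*(lx+lw)^2*lv^2))
    / (herd_alpha lx lv lw * lx/2 + herd_alpha lx lv lw * lw/2 + lv)"

lemma coeff_ok:
  fixes lx lv lw M0 p :: real
  assumes lx: "lx > 0" and lv: "lv > 0" and lw: "lw > 0" and M0: "M0 > 0"
    and R: "lv^2*M0*lw > 2*lx^2" and p: "M0 \<le> p" "p \<le> 1"
  defines "\<alpha> \<equiv> herd_alpha lx lv lw"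
  defines "A \<equiv> \<alpha>*lx*p/2 + \<alpha>*lw/2" and "C \<equiv> lv*p - \<alpha>/2" and "K \<equiv> \<alpha>*lv/2 + lx"
  defines "lam \<equiv> lamc lx lv lw M0"
  shows "lam > 0" "A - lam \<ge> 0" "C - lam \<ge> 0" "(K*p)^2 \<le> 4*(A-lam)*(C-lam)"
proof -
  define sg where "sg = lx + lw"
  have sg: "sg > 0" using lx lw sg_def by simp
  have al: "\<alpha> = 2*lx^2/(sg*lv)" unfolding \<alpha>_def herd_alpha_def sg_def by simp
  have alp: "\<alpha> > 0" using al sg lx lv by simp
  define h where "h = lv^2*p*(4*lw* sg - lw^2*p) - 4*lx^2*(lx*p + lw)"
  define h1 where "h1 = lv^2*M0*(4*lw* sg - lw^2) - 4*lx^3 - 4*lx^2*lw"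
  have iden: "4*A*C - (K*p)^2 = lx^2 * h / (sg^2*lv^2)"
    unfolding A_def C_def K_def h_def al using sg lv
    apply (simp add: field_simps power2_eq_square)
    apply (simp add: sg_def algebra_simps)
    done
  have f1: "4*lw* sg - lw^2*p > 0"
  proof -
    have "lw^2*p \<le> lw^2" using p by (simp add: mult_left_le)
    moreover have "lw^2 < 4*lw* sg" using lw lx sg_def
      by (simp add: power2_eq_square algebra_simps, intro add_pos_pos mult_pos_pos, auto)
    ultimately show ?thesis by linarith
  qed
  have "lv^2*p*(4*lw* sg - lw^2*p) \<ge> lv^2*M0*(4*lw* sg - lw^2*p)"
    using f1 p by (intro mult_right_mono mult_left_mono) auto
  moreover have "lv^2*M0*lw^2*p + 4*lx^3*p \<le> lv^2*M0*lw^2 + 4*lx^3"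
    using p M0 lx lv lw by (intro add_mono mult_left_le) auto
  ultimately have hh1: "h \<ge> h1" unfolding h_def h1_def by (simp add: algebra_simps power3_eq_cube power2_eq_square)
  have "lv^2*M0*(4*lw* sg - lw^2) = (lv^2*M0*lw)*(4*lx+3*lw)" unfolding sg_def by (simp add: algebra_simps power2_eq_square)
  also have "\<dots> > 2*lx^2*(4*lx+3*lw)" using R lx lw by (intro mult_strict_right_mono) auto
  finally have X: "lv^2*M0*(4*lw* sg - lw^2) > 2*lx^2*(4*lx+3*lw)" .
  have "lx*lx*lx > 0" "lw*lx*lx > 0" using lx lw by auto
  then have h1p: "h1 > 0" unfolding h1_def using X by (simp add: power2_eq_square power3_eq_cube algebra_simps)
  define d0 where "d0 = lx^2*h1/(4* sg^2*lv^2)"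
  define T1 where "T1 = \<alpha>*lx/2 + \<alpha>*lw/2 + lv"
  have d0p: "d0 > 0" unfolding d0_def using h1p lx lv sg by simp
  have T1p: "T1 > 0" unfolding T1_def using alp lx lw lv by (simp add: add_pos_pos)
  have lamd: "lam = d0/T1" unfolding lam_def lamc_def d0_def T1_def h1_def \<alpha>_def sg_def by simp
  show lp: "lam > 0" using lamd d0p T1p by simp
  have det: "4*A*C - (K*p)^2 \<ge> 4*d0"
  proof -
    have "lx^2*h/(sg^2*lv^2) \<ge> lx^2*h1/(sg^2*lv^2)" using hh1 sg lv
      by (intro divide_right_mono mult_left_mono) auto
    then show ?thesis unfolding iden d0_def by (simp add: field_simps)
  qed
  have Ap: "A > 0" unfolding A_def using alp lx lw p M0 by (simp add: add_pos_pos)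
  have Cp: "C > 0"
  proof -
    have "lv*M0*(lv*lw) > 2*lx^2" using R by (simp add: power2_eq_square algebra_simps)
    then have "lv*M0 > 2*lx^2/(lv*lw)" using lv lw by (simp add: field_simps)
    moreover have "2*lx^2/(lv*lw) \<ge> lx^2/(sg*lv)"
    proof -
      have "lx^2/(sg*lv) \<le> lx^2/(lw*lv)" using lx lv lw sg_def
        by (intro divide_left_mono mult_right_mono mult_pos_pos) auto
      also have "\<dots> \<le> 2*lx^2/(lv*lw)" using lx lv lw by (simp add: field_simps)
      finally show ?thesis .
    qed
    moreover have "lv*p \<ge> lv*M0" using p lv by simp
    ultimately show ?thesis unfolding C_def al by (simp add: field_simps)
  qed
  have tr: "A + C \<le> T1"
  proof -
    have a: "lv*p \<le> lv" using p lv by (simp add: mult_left_le)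
    have b: "\<alpha>*lx*p \<le> \<alpha>*lx" using p alp lx by (intro mult_left_le) auto
    show ?thesis unfolding A_def C_def T1_def using alp a b by linarith
  qed
  have lAC: "lam*(A+C) \<le> d0"
  proof -
    have "lam*(A+C) \<le> lam*T1" using tr lp by (intro mult_left_mono) auto
    then show ?thesis using lamd T1p by simp
  qed
  have key: "A*C - lam*(A+C) \<ge> (K*p)^2/4" using det lAC by linarith
  have "A*C \<ge> lam*(A+C)" using key by (smt (verit) zero_le_power2 divide_nonneg_pos)
  then have "A*C \<ge> lam*C" "A*C \<ge> lam*A" using lp Ap Cp by (smt (verit) mult_pos_pos distrib_left)+
  then show "A - lam \<ge> 0" "C - lam \<ge> 0" using Ap Cp by (simp_all add: mult.commute)
  show "(K*p)^2 \<le> 4*(A-lam)*(C-lam)"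
  proof -
    have e: "4*(A-lam)*(C-lam) = 4*(A*C - lam*(A+C)) + 4*lam^2" by (simp add: algebra_simps power2_eq_square)
    have "(K*p)^2 \<le> 4*(A*C - lam*(A+C))" using det lAC by (simp add: algebra_simps)
    also have "\<dots> \<le> 4*(A-lam)*(C-lam)" unfolding e by simp
    finally show ?thesis .
  qed
qed


lemma inner_deriv:
  fixes f g :: "real \<Rightarrow> 'a::real_inner"
  assumes "(f has_vector_derivative f') (at t within S)" "(g has_vector_derivative g') (at t within S)"
  shows "((\<lambda>t. f t \<bullet> g t) has_real_derivative (f' \<bullet> g t + f t \<bullet> g')) (at t within S)"
proof -
  have "((\<lambda>t. f t \<bullet> g t) has_derivative (\<lambda>h. f t \<bullet> (h *\<^sub>R g') + (h *\<^sub>R f') \<bullet> g t)) (at t within S)"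
    using assms unfolding has_vector_derivative_def by (intro has_derivative_inner) auto
  then show ?thesis unfolding has_field_derivative_def
    by (rule has_derivative_eq_rhs) (auto simp: algebra_simps)
qed

lemma phi_sym: "herd_phi \<gamma> y z = herd_phi \<gamma> z y"
  unfolding herd_phi_def by (simp add: norm_minus_commute)

lemma pair_cancel:
  fixes ph :: "nat \<Rightarrow> nat \<Rightarrow> real" and y :: "nat \<Rightarrow> 'a::real_vector"
  assumes "\<And>i j. ph i j = ph j i"
  shows "(\<Sum>i<N. \<Sum>j<N. ph i j *\<^sub>R (y j - y i)) = 0"
proof -
  have "(\<Sum>i<N. \<Sum>j<N. ph i j *\<^sub>R y j) = (\<Sum>j<N. \<Sum>i<N. ph i j *\<^sub>R y j)" by (rule sum.swap)
  also have "\<dots> = (\<Sum>i<N. \<Sum>j<N. ph i j *\<^sub>R y i)" using assms by (intro sum.cong refl) metis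
  finally show ?thesis by (simp add: scaleR_diff_right sum_subtractf)
qed

definition acc :: "nat \<Rightarrow> real \<Rightarrow> real \<Rightarrow> real \<Rightarrow> real \<Rightarrow>
   (nat \<Rightarrow> real \<Rightarrow> real^'m) \<Rightarrow> (nat \<Rightarrow> real \<Rightarrow> real^'m) \<Rightarrow> nat \<Rightarrow> real \<Rightarrow> real^'m" where
  "acc N \<gamma> lx lv lw x v i t =
            ((lx / real N) *\<^sub>R (\<Sum>j<N. herd_phi \<gamma> (x i t) (x j t) *\<^sub>R (x j t - x i t))
           + (lv / real N) *\<^sub>R (\<Sum>j<N. herd_phi \<gamma> (x i t) (x j t) *\<^sub>R (v j t - v i t))
           - lw *\<^sub>R x i t)"

lemma sol_D:
  assumes "herd_solution N \<gamma> lx lv lw x v" "i < N" "t \<ge> 0"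
  shows "(x i has_vector_derivative v i t) (at t within {0..})"
        "(v i has_vector_derivative acc N \<gamma> lx lv lw x v i t) (at t within {0..})"
  using assms unfolding herd_solution_def acc_def by auto

lemma acc_sum: "(\<Sum>i<N. acc N \<gamma> lx lv lw x v i t) = - lw *\<^sub>R (\<Sum>i<N. x i t)"
proof -
  have "(\<Sum>i<N. acc N \<gamma> lx lv lw x v i t) =
     (lx / real N) *\<^sub>R (\<Sum>i<N. \<Sum>j<N. herd_phi \<gamma> (x i t) (x j t) *\<^sub>R (x j t - x i t))
   + (lv / real N) *\<^sub>R (\<Sum>i<N. \<Sum>j<N. herd_phi \<gamma> (x i t) (x j t) *\<^sub>R (v j t - v i t))
   - lw *\<^sub>R (\<Sum>i<N. x i t)"
    unfolding acc_def by (simp add: sum.distrib sum_subtractf scaleR_sum_right)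
  also have "\<dots> = - lw *\<^sub>R (\<Sum>i<N. x i t)"
    using pair_cancel[where ph="\<lambda>i j. herd_phi \<gamma> (x i t) (x j t)" and N=N and y="\<lambda>j. x j t"]
          pair_cancel[where ph="\<lambda>i j. herd_phi \<gamma> (x i t) (x j t)" and N=N and y="\<lambda>j. v j t"]
    by (simp add: phi_sym)
  finally show ?thesis .
qed

lemma sums_zero:
  assumes sol: "herd_solution N \<gamma> lx lv lw x v" and lw: "lw > 0"
    and x0: "(\<Sum>i<N. x i 0) = 0" and v0: "(\<Sum>i<N. v i 0) = 0" and t: "t \<ge> 0"
  shows "(\<Sum>i<N. x i t) = 0 \<and> (\<Sum>i<N. v i t) = 0"
proof -
  define S where "S = (\<lambda>t. \<Sum>i<N. x i t)"
  define W where "W = (\<lambda>t. \<Sum>i<N. v i t)"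
  have dS: "(S has_vector_derivative W t) (at t within {0..})" if "t \<ge> 0" for t
    unfolding S_def W_def using sol_D(1)[OF sol _ that] by (intro has_vector_derivative_sum) auto
  have dW: "(W has_vector_derivative (- lw *\<^sub>R S t)) (at t within {0..})" if "t \<ge> 0" for t
  proof -
    have "(W has_vector_derivative (\<Sum>i<N. acc N \<gamma> lx lv lw x v i t)) (at t within {0..})"
      unfolding W_def using sol_D(2)[OF sol _ that] by (intro has_vector_derivative_sum) auto
    then show ?thesis unfolding acc_sum S_def .
  qed
  define F where "F = (\<lambda>t. lw * (S t \<bullet> S t) + W t \<bullet> W t)"
  have dF: "(F has_real_derivative 0) (at t within {0..})" if "t \<in> {0..}" for t
  proof -
    have "(F has_real_derivative (lw * (W t \<bullet> S t + S t \<bullet> W t) + ((- lw *\<^sub>R S t) \<bullet> W t + W t \<bullet> (- lw *\<^sub>R S t))))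
        (at t within {0..})"
      unfolding F_def using that
      by (intro DERIV_add DERIV_cmult inner_deriv dS dW) auto
    then show ?thesis by (rule DERIV_cong) (simp add: inner_commute algebra_simps)
  qed
  obtain c where c: "\<forall>t\<in>{0..}. F t = c"
    using has_field_derivative_zero_constant[of "{0::real..}" F] dF by auto
  have "F 0 = 0" unfolding F_def S_def W_def using x0 v0 by simp
  then have "F t = 0" using c t by auto
  then have "lw * (S t \<bullet> S t) + W t \<bullet> W t = 0" unfolding F_def .
  moreover have "S t \<bullet> S t \<ge> 0" "W t \<bullet> W t \<ge> 0" by auto
  ultimately have "S t \<bullet> S t = 0" "W t \<bullet> W t = 0" using lw
    by (smt (verit) mult_pos_pos mult_nonneg_nonneg)+
  then show ?thesis unfolding S_def W_def by simp
qed



lemma L1: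
  fixes ph :: "nat \<Rightarrow> nat \<Rightarrow> real" and y z :: "nat \<Rightarrow> 'a::real_inner"
  assumes sym: "\<And>i j. ph i j = ph j i"
  shows "(\<Sum>i<N. z i \<bullet> (\<Sum>j<N. ph i j *\<^sub>R (y j - y i))) =
         -(1/2) * (\<Sum>i<N. \<Sum>j<N. ph i j * ((z i - z j) \<bullet> (y i - y j)))"
proof -
  define T where "T = (\<Sum>i<N. \<Sum>j<N. ph i j * (z i \<bullet> (y j - y i)))"
  have e1: "(\<Sum>i<N. z i \<bullet> (\<Sum>j<N. ph i j *\<^sub>R (y j - y i))) = T"
    unfolding T_def by (simp add: inner_sum_right)
  have "T = (\<Sum>j<N. \<Sum>i<N. ph i j * (z i \<bullet> (y j - y i)))" unfolding T_def by (rule sum.swap)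
  also have "\<dots> = (\<Sum>i<N. \<Sum>j<N. ph i j * (z j \<bullet> (y i - y j)))"
    using sym by (intro sum.cong refl) metis
  finally have e2: "T = (\<Sum>i<N. \<Sum>j<N. ph i j * (z j \<bullet> (y i - y j)))" .
  have "2*T = T + T" by simp
  also have "\<dots> = (\<Sum>i<N. \<Sum>j<N. ph i j * (z i \<bullet> (y j - y i))) + (\<Sum>i<N. \<Sum>j<N. ph i j * (z j \<bullet> (y i - y j)))"
    using e2 by (simp add: T_def)
  also have "\<dots> = (\<Sum>i<N. \<Sum>j<N. ph i j * (z i \<bullet> (y j - y i)) + ph i j * (z j \<bullet> (y i - y j)))"
    by (simp add: sum.distrib)
  also have "\<dots> = (\<Sum>i<N. \<Sum>j<N. - (ph i j * ((z i - z j) \<bullet> (y i - y j))))"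
    by (intro sum.cong refl) (simp add: inner_diff_left inner_diff_right algebra_simps)
  finally have "2*T = - (\<Sum>i<N. \<Sum>j<N. ph i j * ((z i - z j) \<bullet> (y i - y j)))"
    by (simp add: sum_negf)
  then show ?thesis using e1 by simp
qed

lemma L2:
  fixes y z :: "nat \<Rightarrow> 'a::real_inner"
  shows "(\<Sum>i<N. \<Sum>j<N. (z i - z j) \<bullet> (y i - y j)) =
          2 * real N * (\<Sum>i<N. z i \<bullet> y i) - 2 * ((\<Sum>i<N. z i) \<bullet> (\<Sum>i<N. y i))"
proof -
  have "(\<Sum>i<N. \<Sum>j<N. (z i - z j) \<bullet> (y i - y j)) =
      (\<Sum>i<N. \<Sum>j<N. z i \<bullet> y i) + (\<Sum>i<N. \<Sum>j<N. z j \<bullet> y j)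
      - (\<Sum>i<N. \<Sum>j<N. z i \<bullet> y j) - (\<Sum>i<N. \<Sum>j<N. z j \<bullet> y i)"
    by (simp add: inner_diff_left inner_diff_right sum.distrib sum_subtractf algebra_simps)
  also have "(\<Sum>i<N. \<Sum>j<N. z i \<bullet> y j) = (\<Sum>i<N. z i) \<bullet> (\<Sum>i<N. y i)"
    by (simp add: inner_sum_left inner_sum_right, rule sum.swap)
  also have "(\<Sum>i<N. \<Sum>j<N. z j \<bullet> y i) = (\<Sum>i<N. z i) \<bullet> (\<Sum>i<N. y i)"
    by (simp add: inner_sum_left inner_sum_right)
  also have "(\<Sum>i<N. \<Sum>j<N. z j \<bullet> y j) = real N * (\<Sum>i<N. z i \<bullet> y i)" by simp
  also have "(\<Sum>i<N. \<Sum>j<N. z i \<bullet> y i) = real N * (\<Sum>i<N. z i \<bullet> y i)" by (simp add: sum_distrib_left mult.commute)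
  finally show ?thesis by simp
qed

lemma R_aux:
  fixes ph a b c :: "nat \<Rightarrow> nat \<Rightarrow> real" and lx lv lw al :: real
  shows "(\<Sum>i<N. \<Sum>j<N.
        - (al*lx*ph i j/2 + al*lw/2) * a i j - (al*lv/2 + lx) * ph i j * b i j - (lv * ph i j - al/2) * c i j)
     = - (al*lx/2) * (\<Sum>i<N. \<Sum>j<N. ph i j * a i j) - (al*lw/2) * (\<Sum>i<N. \<Sum>j<N. a i j)
       - (al*lv/2 + lx) * (\<Sum>i<N. \<Sum>j<N. ph i j * b i j) - lv * (\<Sum>i<N. \<Sum>j<N. ph i j * c i j)
       + (al/2) * (\<Sum>i<N. \<Sum>j<N. c i j)"
  by (simp add: sum.distrib sum_subtractf sum_distrib_left algebra_simps sum_negf sum_divide_distrib)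

lemma DE_identity:
  fixes xs vs :: "nat \<Rightarrow> 'a::real_inner" and ph :: "nat \<Rightarrow> nat \<Rightarrow> real" and lx lv lw al :: real
  assumes sym: "\<And>i j. ph i j = ph j i" and sx: "(\<Sum>i<N. xs i) = 0" and sv: "(\<Sum>i<N. vs i) = 0"
    and N: "N > 0"
  defines "a \<equiv> \<lambda>i. (lx/real N) *\<^sub>R (\<Sum>j<N. ph i j *\<^sub>R (xs j - xs i))
        + (lv/real N) *\<^sub>R (\<Sum>j<N. ph i j *\<^sub>R (vs j - vs i)) - lw *\<^sub>R xs i"
  shows "lw*(\<Sum>i<N. vs i \<bullet> xs i + xs i \<bullet> vs i) + al*(\<Sum>i<N. vs i \<bullet> vs i + xs i \<bullet> a i)
          + (\<Sum>i<N. a i \<bullet> vs i + vs i \<bullet> a i)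
   = (1/real N) * (\<Sum>i<N. \<Sum>j<N.
        - (al*lx*ph i j/2 + al*lw/2) * ((xs i - xs j) \<bullet> (xs i - xs j))
        - (al*lv/2 + lx) * ph i j * ((xs i - xs j) \<bullet> (vs i - vs j))
        - (lv * ph i j - al/2) * ((vs i - vs j) \<bullet> (vs i - vs j)))"
proof -
  define Pxx where "Pxx = (\<Sum>i<N. \<Sum>j<N. ph i j * ((xs i - xs j) \<bullet> (xs i - xs j)))"
  define Pxv where "Pxv = (\<Sum>i<N. \<Sum>j<N. ph i j * ((xs i - xs j) \<bullet> (vs i - vs j)))"
  define Pvv where "Pvv = (\<Sum>i<N. \<Sum>j<N. ph i j * ((vs i - vs j) \<bullet> (vs i - vs j)))"
  define X where "X = (\<Sum>i<N. xs i \<bullet> xs i)"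
  define V where "V = (\<Sum>i<N. vs i \<bullet> vs i)"
  define Cc where "Cc = (\<Sum>i<N. xs i \<bullet> vs i)"
  have Pvx: "(\<Sum>i<N. \<Sum>j<N. ph i j * ((vs i - vs j) \<bullet> (xs i - xs j))) = Pxv"
    unfolding Pxv_def by (simp add: inner_commute)
  have xa: "(\<Sum>i<N. xs i \<bullet> a i) = (lx/real N) * (-(1/2)*Pxx) + (lv/real N) * (-(1/2)*Pxv) - lw * X"
  proof -
    have "(\<Sum>i<N. xs i \<bullet> a i) = (lx/real N) * (\<Sum>i<N. xs i \<bullet> (\<Sum>j<N. ph i j *\<^sub>R (xs j - xs i)))
       + (lv/real N) * (\<Sum>i<N. xs i \<bullet> (\<Sum>j<N. ph i j *\<^sub>R (vs j - vs i))) - lw * X"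
      unfolding a_def X_def by (simp add: inner_add_right inner_diff_right sum.distrib sum_subtractf sum_distrib_left)
    then show ?thesis unfolding Pxx_def Pxv_def using L1[OF sym, where N=N and z=xs and y=xs] L1[OF sym, where N=N and z=xs and y=vs] by simp
  qed
  have va: "(\<Sum>i<N. vs i \<bullet> a i) = (lx/real N) * (-(1/2)*Pxv) + (lv/real N) * (-(1/2)*Pvv) - lw * Cc"
  proof -
    have "(\<Sum>i<N. vs i \<bullet> a i) = (lx/real N) * (\<Sum>i<N. vs i \<bullet> (\<Sum>j<N. ph i j *\<^sub>R (xs j - xs i)))
       + (lv/real N) * (\<Sum>i<N. vs i \<bullet> (\<Sum>j<N. ph i j *\<^sub>R (vs j - vs i))) - lw * Cc"
      unfolding a_def Cc_def by (simp add: inner_add_right inner_diff_right sum.distrib sum_subtractf sum_distrib_left inner_commute)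
    then show ?thesis unfolding Pvv_def using L1[OF sym, where N=N and z=vs and y=xs] L1[OF sym, where N=N and z=vs and y=vs] Pvx by simp
  qed
  have Qxx: "(\<Sum>i<N. \<Sum>j<N. (xs i - xs j) \<bullet> (xs i - xs j)) = 2 * real N * X"
    using L2[where N=N and z=xs and y=xs] sx unfolding X_def by simp
  have Qvv: "(\<Sum>i<N. \<Sum>j<N. (vs i - vs j) \<bullet> (vs i - vs j)) = 2 * real N * V"
    using L2[where N=N and z=vs and y=vs] sv unfolding V_def by simp
  have R: "(\<Sum>i<N. \<Sum>j<N.
        - (al*lx*ph i j/2 + al*lw/2) * ((xs i - xs j) \<bullet> (xs i - xs j))
        - (al*lv/2 + lx) * ph i j * ((xs i - xs j) \<bullet> (vs i - vs j))
        - (lv * ph i j - al/2) * ((vs i - vs j) \<bullet> (vs i - vs j)))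
     = - (al*lx/2) * Pxx - (al*lw/2) * (\<Sum>i<N. \<Sum>j<N. (xs i - xs j) \<bullet> (xs i - xs j))
       - (al*lv/2 + lx) * Pxv - lv * Pvv + (al/2) * (\<Sum>i<N. \<Sum>j<N. (vs i - vs j) \<bullet> (vs i - vs j))"
    unfolding Pxx_def Pxv_def Pvv_def
    by (rule R_aux[where a="\<lambda>i j. (xs i - xs j) \<bullet> (xs i - xs j)" and b="\<lambda>i j. (xs i - xs j) \<bullet> (vs i - vs j)"
         and c="\<lambda>i j. (vs i - vs j) \<bullet> (vs i - vs j)"])
  have L: "lw*(\<Sum>i<N. vs i \<bullet> xs i + xs i \<bullet> vs i) + al*(\<Sum>i<N. vs i \<bullet> vs i + xs i \<bullet> a i)
          + (\<Sum>i<N. a i \<bullet> vs i + vs i \<bullet> a i) = lw*(2*Cc) + al*(V + (\<Sum>i<N. xs i \<bullet> a i)) + 2*(\<Sum>i<N. vs i \<bullet> a i)"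
    unfolding Cc_def V_def by (simp add: sum.distrib inner_commute sum_distrib_left)
  show ?thesis unfolding L R Qxx Qvv xa va using N by (simp add: field_simps)
qed



lemma bootstrap:
  fixes H G :: "real \<Rightarrow> real" and B :: real
  assumes dH: "\<And>t. t \<ge> 0 \<Longrightarrow> (H has_real_derivative G t) (at t within {0..})"
    and neg: "\<And>t. t \<ge> 0 \<Longrightarrow> H t \<le> B \<Longrightarrow> G t \<le> 0"
    and H0: "H 0 < B" and t1: "t1 \<ge> 0"
  shows "H t1 \<le> H 0"
proof (rule ccontr)
  assume "\<not> H t1 \<le> H 0"
  then have big: "H t1 > H 0" by simp
  define m where "m = min (H t1) B"
  have m0: "m > H 0" using big H0 unfolding m_def by simp
  have cont: "continuous_on {0..} H"
    unfolding continuous_on_eq_continuous_within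
    using dH by (auto intro: DERIV_continuous)
  have cont1: "continuous_on {0..t1} H" using cont by (rule continuous_on_subset) auto
  define Z where "Z = {0..t1} \<inter> H -` {m..}"
  have Zc: "closed Z" unfolding Z_def by (intro continuous_closed_preimage cont1) auto
  have Zn: "t1 \<in> Z" unfolding Z_def m_def using t1 by auto
  have Zb: "bdd_below Z" unfolding Z_def by (rule bdd_belowI[of _ 0]) auto
  define t2 where "t2 = Inf Z"
  have t2Z: "t2 \<in> Z" unfolding t2_def using Zc Zn Zb closed_contains_Inf by blast
  then have t2: "0 \<le> t2" "t2 \<le> t1" "H t2 \<ge> m" unfolding Z_def by auto
  have below: "H s < m" if "0 \<le> s" "s < t2" for s
  proof (rule ccontr)
    assume "\<not> H s < m"
    then have "s \<in> Z" unfolding Z_def using that t2 by auto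
    then have "t2 \<le> s" unfolding t2_def using Zb by (rule cInf_lower)
    then show False using that by simp
  qed
  have "H t2 \<le> H 0"
  proof (rule DERIV_nonpos_imp_decreasing_open[OF t2(1)])
    fix s assume s: "0 < s" "s < t2"
    have "(H has_real_derivative G s) (at s within {0<..})"
      using s by (rule_tac DERIV_subset[OF dH[of s]]) auto
    moreover have "at s within {0<..} = at s" using s by (intro at_within_open) auto
    ultimately have "(H has_real_derivative G s) (at s)" by simp
    moreover have "G s \<le> 0" using neg[of s] below[of s] s m_def by auto
    ultimately show "\<exists>y. DERIV H s :> y \<and> y \<le> 0" by blast
  next
    show "continuous_on {0..t2} H" using cont by (rule continuous_on_subset) auto
  qed
  then show False using t2(3) m0 by simp
qed



lemma q_aux:
  fixes A C K p lam a b cc :: real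
  assumes "(A-lam)*a + (C-lam)*b + (K*p)*cc \<ge> 0"
  shows "- A * a - K * p * cc - C * b \<le> -lam*(a+b)"
  using assms by (simp add: algebra_simps)

theorem corollary3p5:
  fixes N :: nat and \<gamma> lx lv lw :: real
    and x v :: "nat \<Rightarrow> real \<Rightarrow> real^'m"
  assumes "N \<ge> 1" and "\<gamma> > 0" and "lx > 0" and "lv > 0" and "lw > 0"
    and sol: "herd_solution N \<gamma> lx lv lw x v"
    and x0: "(\<Sum>i<N. x i 0) = 0" and v0: "(\<Sum>i<N. v i 0) = 0"
    and cond: "1/2 * (lv / lx)\<^sup>2 * lw > 1"
    and diam: "diam0 N x < 1/2 * sqrt ((1/2 * (lv / lx)\<^sup>2 * lw) powr (2 / \<gamma>) - 1)"
    and en: "energy1 N lx lv lw x v 0 <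
               3/2 * (1 - (1 + 4 * (diam0 N x)\<^sup>2) powr (- \<gamma> / 2) / 2) * lw * (diam0 N x)\<^sup>2"
  shows "\<exists>\<delta>. 0 < \<delta> \<and> \<delta> < 1 \<and>
    (let M0 = (1 + 4 * (diam0 N x)\<^sup>2) powr (- \<gamma> / 2);
         \<alpha> = herd_alpha lx lv lw;
         \<kappa> = \<delta> * min (1/2) (-1 + 1/2 * (lv / lx)\<^sup>2 * lw * M0) * \<alpha>;
         C1 = 4 / ((2 - M0) * lw);
         C2 = 4 * M0 * lw / (2 * M0 * lw - \<alpha>\<^sup>2);
         E0 = energy1 N lx lv lw x v 0
     in \<forall>t\<ge>0. \<forall>i<N. \<forall>j<N.
          (norm (x i t - x j t))\<^sup>2 \<le> C1 * exp (- \<kappa> * t) * E0 \<and>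
          (norm (v i t - v j t))\<^sup>2 \<le> C2 * exp (- \<kappa> * t) * E0)"
proof -
  note lx = \<open>lx > 0\<close> and lv = \<open>lv > 0\<close> and lw = \<open>lw > 0\<close> and gp = \<open>\<gamma> > 0\<close>
  have Nr: "real N > 0" and N0: "N > 0" using assms(1) by auto
  define D where "D = diam0 N x"
  define M0 where "M0 = (1 + 4*D^2) powr (-\<gamma>/2)"
  define al where "al = herd_alpha lx lv lw"
  define A0 where "A0 = 1/2 * (lv / lx)\<^sup>2 * lw"
  have fin: "finite {norm (x i 0 - x j 0) | i j. i < N \<and> j < N}"
  proof -
    have "{norm (x i 0 - x j 0) | i j. i < N \<and> j < N} = (\<lambda>(i,j). norm (x i 0 - x j 0)) ` ({..<N} \<times> {..<N})"
      by auto
    then show ?thesis by simp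
  qed
  have D0: "D \<ge> 0"
  proof -
    have "norm (x 0 0 - x 0 0) \<in> {norm (x i 0 - x j 0) | i j. i < N \<and> j < N}" using N0 by blast
    then have "norm (x 0 0 - x 0 0) \<le> D" unfolding D_def diam0_def using fin by (intro Max_ge)
    then show ?thesis by simp
  qed
  have b0: "1 + 4*D^2 > 0" using zero_le_power2[of D] by linarith
  have M0p: "M0 > 0" unfolding M0_def using b0 by simp
  have M01: "M0 \<le> 1"
  proof -
    have "(1 + 4*D^2) powr (-\<gamma>/2) \<le> 1 powr (-\<gamma>/2)" using gp by (intro powr_mono2') auto
    then show ?thesis unfolding M0_def by simp
  qed
  have MA: "M0 * A0 > 1"
  proof -
    define y where "y = A0 powr (2/\<gamma>) - 1"
    have "2*D < sqrt y" using diam unfolding y_def D_def A0_def by simp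
    then have sy: "sqrt y > 0" using D0 by linarith
    then have "y > 0" by simp
    have "(2*D)^2 < (sqrt y)^2" using \<open>2*D < sqrt y\<close> D0 by (intro power_strict_mono) auto
    then have "4*D^2 < y" using \<open>y > 0\<close> by (simp add: power_mult_distrib)
    then have lt: "1 + 4*D^2 < A0 powr (2/\<gamma>)" unfolding y_def by simp
    have A0p: "A0 > 0" unfolding A0_def using lx lv lw by simp
    have "(1 + 4*D^2) powr (\<gamma>/2) < (A0 powr (2/\<gamma>)) powr (\<gamma>/2)"
      using gp lt by (intro powr_less_mono2) auto
    also have "\<dots> = A0" using gp A0p by (simp add: powr_powr)
    finally have lt2: "(1 + 4*D^2) powr (\<gamma>/2) < A0" .
    have "M0 = inverse ((1 + 4*D^2) powr (\<gamma>/2))" unfolding M0_def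
      by (simp add: powr_minus[symmetric])
    moreover have Pp: "(1 + 4*D^2) powr (\<gamma>/2) > 0" using b0 by simp
    ultimately have "M0 * (1 + 4*D^2) powr (\<gamma>/2) = 1" by simp
    moreover have "M0 * (1 + 4*D^2) powr (\<gamma>/2) < M0 * A0" using lt2 M0p by (intro mult_strict_left_mono)
    ultimately show ?thesis by simp
  qed
  have R: "lv^2*M0*lw > 2*lx^2"
  proof -
    have "M0 * (1/2 * (lv^2/lx^2) * lw) > 1" using MA unfolding A0_def by (simp add: power_divide)
    then show ?thesis using lx by (simp add: field_simps)
  qed
  have alp: "al > 0" unfolding al_def herd_alpha_def using lx lv lw by simp
  have al2: "al^2 < 2*M0*lw"
  proof -
    have "al = (2*lx/lv) * (lx/(lx+lw))" unfolding al_def herd_alpha_def by (simp add: power2_eq_square mult.commute mult.assoc)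
    also have "\<dots> \<le> (2*lx/lv) * 1" using lx lv lw by (intro mult_left_mono) auto
    finally have "al \<le> 2*lx/lv" by simp
    then have "al^2 \<le> (2*lx/lv)^2" using alp by (intro power_mono) auto
    also have "\<dots> = 4*lx^2/lv^2" by (simp add: power_divide)
    also have "\<dots> < 2*M0*lw" using R lv by (simp add: field_simps)
    finally show ?thesis .
  qed
  define lam where "lam = lamc lx lv lw M0"
  have lamp: "lam > 0" unfolding lam_def using coeff_ok(1)[OF lx lv lw M0p R order.refl M01] .
  define Mx where "Mx = lw + al/2 + 1"
  have Mxp: "Mx > 0" unfolding Mx_def using lw alp by simp
  define c where "c = 2*lam/Mx"
  have cp: "c > 0" unfolding c_def using lamp Mxp by simp
  define E where "E = energy1 N lx lv lw x v"
  define X where "X = (\<lambda>t. \<Sum>i<N. (norm (x i t))^2)"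
  define V where "V = (\<lambda>t. \<Sum>i<N. (norm (v i t))^2)"
  have Eexp: "E t = lw*X t + al*(\<Sum>i<N. x i t \<bullet> v i t) + V t" for t
    unfolding E_def energy1_def Xf_def Vf_def CXV_def al_def X_def V_def by simp
  have szero: "(\<Sum>i<N. x i t) = 0 \<and> (\<Sum>i<N. v i t) = 0" if "t \<ge> 0" for t
    using sums_zero[OF sol lw x0 v0 that] .
  have EX: "E t \<ge> (1 - M0/2)*lw*X t" for t
    unfolding Eexp X_def V_def using E_lower1[OF lw M0p alp, where xs="\<lambda>i. x i t" and vs="\<lambda>i. v i t" and N=N] al2 by simp
  have EV: "E t \<ge> (1 - al^2/(2*M0*lw))*V t" for t
    unfolding Eexp X_def V_def using E_lower2[OF lw M0p M01 alp, where xs="\<lambda>i. x i t" and vs="\<lambda>i. v i t" and N=N] by simp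
  have EU: "E t \<le> Mx*(X t + V t)" for t
    unfolding Eexp X_def V_def Mx_def using E_upper[where xs="\<lambda>i. x i t" and vs="\<lambda>i. v i t" and N=N and lw=lw and al=al] lw alp by simp
  have Xnn: "X t \<ge> 0" for t unfolding X_def by (auto intro: sum_nonneg)
  have Vnn: "V t \<ge> 0" for t unfolding V_def by (auto intro: sum_nonneg)
  have Enn: "E t \<ge> 0" for t
  proof -
    have "(1 - M0/2)*lw*X t \<ge> 0" using M01 lw Xnn by simp
    then show ?thesis using EX[of t] by linarith
  qed
  define ac where "ac = acc N \<gamma> lx lv lw x v"
  define DE where "DE = (\<lambda>t. lw*(\<Sum>i<N. v i t \<bullet> x i t + x i t \<bullet> v i t)
       + al*(\<Sum>i<N. v i t \<bullet> v i t + x i t \<bullet> ac i t) + (\<Sum>i<N. ac i t \<bullet> v i t + v i t \<bullet> ac i t))"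
  have Efun: "E = (\<lambda>t. lw*(\<Sum>i<N. x i t \<bullet> x i t) + al*(\<Sum>i<N. x i t \<bullet> v i t) + (\<Sum>i<N. v i t \<bullet> v i t))"
    unfolding E_def energy1_def Xf_def Vf_def CXV_def al_def by (simp add: power2_norm_eq_inner)
  have dE: "(E has_real_derivative DE t) (at t within {0..})" if t: "t \<ge> 0" for t
    unfolding Efun DE_def ac_def
    by (intro DERIV_add DERIV_cmult DERIV_sum inner_deriv sol_D[OF sol _ t]) auto
  define q where "q = (\<lambda>t i j.
        - (al*lx*herd_phi \<gamma> (x i t) (x j t)/2 + al*lw/2) * ((x i t - x j t) \<bullet> (x i t - x j t))
        - (al*lv/2 + lx) * herd_phi \<gamma> (x i t) (x j t) * ((x i t - x j t) \<bullet> (v i t - v j t))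
        - (lv * herd_phi \<gamma> (x i t) (x j t) - al/2) * ((v i t - v j t) \<bullet> (v i t - v j t)))"
  have DEid: "DE t = (1/real N) * (\<Sum>i<N. \<Sum>j<N. q t i j)" if t: "t \<ge> 0" for t
  proof -
    note inst = DE_identity[where ph="\<lambda>i j. herd_phi \<gamma> (x i t) (x j t)" and xs="\<lambda>i. x i t"
       and vs="\<lambda>i. v i t" and lx=lx and lv=lv and lw=lw and al=al and N=N, OF phi_sym
       conjunct1[OF szero[OF t]] conjunct2[OF szero[OF t]] N0]
    show ?thesis unfolding DE_def ac_def acc_def q_def using inst by simp
  qed
  have DEle: "DE t \<le> -c * E t" if t: "t \<ge> 0" and small: "\<forall>i<N. \<forall>j<N. (norm (x i t - x j t))^2 \<le> 4*D^2" for t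
  proof -
    have qb: "q t i j \<le> -lam*((x i t - x j t) \<bullet> (x i t - x j t) + (v i t - v j t) \<bullet> (v i t - v j t))"
      if ij: "i < N" "j < N" for i j
    proof -
      define p where "p = herd_phi \<gamma> (x i t) (x j t)"
      have n0: "1 + (norm (x i t - x j t))^2 > 0" using zero_le_power2[of "norm (x i t - x j t)"] by linarith
      have pge: "M0 \<le> p" unfolding p_def herd_phi_def M0_def
        using gp n0 small ij by (intro powr_mono2') auto
      have "p \<le> 1 powr (-\<gamma>/2)" unfolding p_def herd_phi_def
        using gp n0 by (intro powr_mono2') auto
      then have ple: "p \<le> 1" by simp
      note co = coeff_ok[OF lx lv lw M0p R pge ple]
      have Kp: "(herd_alpha lx lv lw*lv/2 + lx)*p \<ge> 0" using pge M0p lx lv lw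
        by (intro mult_nonneg_nonneg add_nonneg_nonneg) (auto simp: herd_alpha_def)
      note qv = quad_vec[OF co(2) co(3) Kp co(4), of "x i t - x j t" "v i t - v j t"]
      show ?thesis unfolding q_def
        using q_aux[OF qv[unfolded power2_norm_eq_inner]] unfolding p_def al_def lam_def by simp
    qed
    have "(\<Sum>i<N. \<Sum>j<N. q t i j) \<le> (\<Sum>i<N. \<Sum>j<N. -lam*((x i t - x j t) \<bullet> (x i t - x j t) + (v i t - v j t) \<bullet> (v i t - v j t)))"
      using qb by (intro sum_mono) auto
    also have "\<dots> = -lam*((\<Sum>i<N. \<Sum>j<N. (x i t - x j t) \<bullet> (x i t - x j t)) + (\<Sum>i<N. \<Sum>j<N. (v i t - v j t) \<bullet> (v i t - v j t)))"
      by (simp add: sum_distrib_left sum.distrib sum_negf distrib_left sum_subtractf)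
    also have "\<dots> = -lam*(2*real N*X t + 2*real N*V t)"
      using L2[where N=N and z="\<lambda>i. x i t" and y="\<lambda>i. x i t"] L2[where N=N and z="\<lambda>i. v i t" and y="\<lambda>i. v i t"]
        szero[OF t] unfolding X_def V_def by (simp add: power2_norm_eq_inner)
    finally have "(\<Sum>i<N. \<Sum>j<N. q t i j) \<le> -lam*(2*real N*X t + 2*real N*V t)" .
    then have "DE t \<le> (1/real N) * (-lam*(2*real N*X t + 2*real N*V t))"
      unfolding DEid[OF t] using Nr by (intro mult_left_mono) auto
    also have "\<dots> = -2*lam*(X t + V t)" using Nr by (simp add: field_simps)
    also have "\<dots> \<le> -c * E t"
    proof -
      have "c * E t \<le> c * (Mx*(X t + V t))" using cp EU[of t] by (intro mult_left_mono) auto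
      also have "\<dots> = 2*lam*(X t + V t)" unfolding c_def using Mxp by simp
      finally show ?thesis by simp
    qed
    finally show ?thesis .
  qed
  define fac where "fac = (1 - M0/2)*lw"
  have facp: "fac > 0" unfolding fac_def using M01 lw by simp
  define Eth where "Eth = 3/2*(1-M0/2)*lw*D^2"
  have E0lt: "E 0 < Eth" using en unfolding E_def Eth_def M0_def D_def by simp
  have dxb: "(norm (x i t - x j t))^2 \<le> 2 * X t" if "i < N" "j < N" for i j t
    unfolding X_def using pair_le[where f="\<lambda>k. x k t", OF that] by simp
  have dvb: "(norm (v i t - v j t))^2 \<le> 2 * V t" if "i < N" "j < N" for i j t
    unfolding V_def using pair_le[where f="\<lambda>k. v k t", OF that] by simp
  have smallE: "\<forall>i<N. \<forall>j<N. (norm (x i t - x j t))^2 \<le> 4*D^2" if t: "t \<ge> 0" and Et: "E t \<le> Eth" for t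
  proof (intro allI impI)
    fix i j assume ij: "i < N" "j < N"
    have "fac * X t \<le> fac * (3/2*D^2)" using EX[of t] Et unfolding fac_def Eth_def by (simp add: algebra_simps)
    then have "X t \<le> 3/2*D^2" using facp by simp
    then show "(norm (x i t - x j t))^2 \<le> 4*D^2" using dxb[OF ij, of t] zero_le_power2[of D] by linarith
  qed
  define H where "H = (\<lambda>t. E t * exp (c*t))"
  define G where "G = (\<lambda>t. DE t * exp (c*t) + (exp (c*t) * c) * E t)"
  have dexp: "((\<lambda>t. exp (c*t)) has_real_derivative exp (c*t) * c) (at t within {0..})" for t
    by (auto intro!: derivative_eq_intros)
  have dH: "(H has_real_derivative G t) (at t within {0..})" if "t \<ge> 0" for t
    unfolding H_def G_def by (rule DERIV_mult[OF dE[OF that] dexp])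
  have neg: "G t \<le> 0" if t: "t \<ge> 0" and Ht: "H t \<le> Eth" for t
  proof -
    have "exp (c*t) \<ge> 1" using cp t by simp
    then have "E t * 1 \<le> E t * exp (c*t)" using Enn[of t] by (intro mult_left_mono) auto
    then have "E t \<le> Eth" using Ht unfolding H_def by simp
    then have "DE t \<le> -c * E t" using DEle[OF t smallE[OF t]] by simp
    then have "DE t + c * E t \<le> 0" by simp
    then have "(DE t + c * E t) * exp (c*t) \<le> 0" by (simp add: mult_nonpos_nonneg)
    then show ?thesis unfolding G_def by (simp add: algebra_simps)
  qed
  have H0: "H 0 = E 0" unfolding H_def by simp
  have Edec: "E t \<le> E 0 * exp (- c * t)" if t: "t \<ge> 0" for t
  proof -
    have "H t \<le> H 0" using bootstrap[where H=H and G=G and B=Eth, OF dH neg _ t] H0 E0lt by simp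
    then have a: "H t * exp (- c * t) \<le> E 0 * exp (- c * t)" unfolding H0 by (intro mult_right_mono) auto
    have b: "H t * exp (- c * t) = E t" unfolding H_def by (simp add: mult.assoc exp_add[symmetric])
    show ?thesis using a b by linarith
  qed
  define mm where "mm = min (1/2) (-1 + 1/2 * (lv / lx)\<^sup>2 * lw * M0)"
  have mmp: "mm > 0" unfolding mm_def using MA unfolding A0_def by (simp add: algebra_simps)
  define \<delta> where "\<delta> = min (1/2) (c/(mm*al))"
  have dp: "\<delta> > 0" unfolding \<delta>_def using cp mmp alp by simp
  have d1: "\<delta> < 1" unfolding \<delta>_def by simp
  have kc: "\<delta> * mm * al \<le> c"
  proof -
    have "\<delta> \<le> c/(mm*al)" unfolding \<delta>_def by simp
    then have "\<delta> * (mm*al) \<le> c/(mm*al) * (mm*al)" using mmp alp by (intro mult_right_mono) auto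
    then show ?thesis using mmp alp by (simp add: mult.assoc)
  qed
  define C1 where "C1 = 4 / ((2 - M0) * lw)"
  define C2 where "C2 = 4 * M0 * lw / (2 * M0 * lw - al\<^sup>2)"
  have C1p: "C1 > 0" unfolding C1_def using M01 lw by simp
  have C2p: "C2 > 0" unfolding C2_def using M0p lw al2 by simp
  have E0nn: "E 0 \<ge> 0" by (rule Enn)
  have main: "(norm (x i t - x j t))\<^sup>2 \<le> C1 * exp (- (\<delta> * mm * al) * t) * E 0 \<and>
          (norm (v i t - v j t))\<^sup>2 \<le> C2 * exp (- (\<delta> * mm * al) * t) * E 0"
    if t: "t \<ge> 0" and ij: "i < N" "j < N" for t i j
  proof -
    have "exp (- c * t) \<le> exp (- (\<delta> * mm * al) * t)" using kc t by (simp add: mult_right_mono)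
    then have Eb: "E t \<le> E 0 * exp (- (\<delta> * mm * al) * t)"
      using Edec[OF t] E0nn by (meson mult_left_mono order_trans)
    have "2 * X t \<le> C1 * E t"
    proof -
      have "C1 * fac = 2" unfolding C1_def fac_def using M01 lw by (simp add: field_simps)
      then have "2 * X t = C1 * (fac * X t)" by simp
      also have "\<dots> \<le> C1 * E t" using EX[of t] C1p unfolding fac_def by (intro mult_left_mono) auto
      finally show ?thesis .
    qed
    also have "\<dots> \<le> C1 * (E 0 * exp (- (\<delta> * mm * al) * t))" using Eb C1p by (intro mult_left_mono) auto
    finally have xb: "(norm (x i t - x j t))\<^sup>2 \<le> C1 * exp (- (\<delta> * mm * al) * t) * E 0"
      using dxb[OF ij, of t] by (simp add: algebra_simps)
    have "2 * V t \<le> C2 * E t"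
    proof -
      have "C2 * (1 - al^2/(2*M0*lw)) = 2" unfolding C2_def using M0p lw al2 by (simp add: field_simps)
      then have "2 * V t = C2 * ((1 - al^2/(2*M0*lw)) * V t)" by simp
      also have "\<dots> \<le> C2 * E t" using EV[of t] C2p by (intro mult_left_mono) auto
      finally show ?thesis .
    qed
    also have "\<dots> \<le> C2 * (E 0 * exp (- (\<delta> * mm * al) * t))" using Eb C2p by (intro mult_left_mono) auto
    finally have vb: "(norm (v i t - v j t))\<^sup>2 \<le> C2 * exp (- (\<delta> * mm * al) * t) * E 0"
      using dvb[OF ij, of t] by (simp add: algebra_simps)
    show ?thesis using xb vb by simp
  qed
  show ?thesis
    unfolding Let_def D_def[symmetric] M0_def[symmetric] al_def[symmetric] E_def[symmetric]
      mm_def[symmetric] C1_def[symmetric] C2_def[symmetric]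
    using dp d1 main by (intro exI[of _ \<delta>]) (auto simp: mult.assoc)
qed

end
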